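(* Let $w(A,B)\in\mathbb F_2=\langle A,B\rangle$ and $m=(m_1)$ with $m_1\in\mathbb Z$. The representation $\Theta_2^{w,m}\colon FVB_2\to\mathrm{Aut}(\mathbb F_4)$ is not faithful if and only if $$w(A,B)=A^{k_1}B^{k_2}\cdots A^{k_r}B^{-k_r}\cdots A^{-k_2}B^{-k_1}A^{m_1}$$ for some integers $k_1,\dots,k_r$ (letters alternating between $A$ and $B$), all nonzero except possibly $k_1$ and $k_r$. In this case $\operatorname{Ker}(\Theta_2^{w,m})=X_2\cong\mathbb Z$, where $X_2=FVP_2\cap FVK_2$ is generated by $(\rho_1\sigma_1)^2$. For all other words $w$ the representation $\Theta_2^{w,m}$ is faithful.
   Context: $FVB_2$ is the group with generators $\sigma_1,\rho_1$ and defining relations $\sigma_1^2=\rho_1^2=1$. $\mathbb F_4$ is the free group on $x_1,x_2,y_1,y_2$; automorphisms compose left to right, $(\varphi\psi)(f)=\psi(\varphi(f))$; generators not mentioned are fixed. $\Theta_2^{w,m}\colon FVB_2\to\mathrm{Aut}(\mathbb F_4)$ is the homomorphism given by $\Theta_2^{w,m}(\sigma_1): x_1\mapsto x_2\,w(y_1,y_2),\ x_2\mapsto x_1\,w(y_1,y_2)^{-1}$ and $\Theta_2^{w,m}(\rho_1): x_1\mapsto x_2y_2^{m_1},\ x_2\mapsto x_1y_1^{-m_1},\ y_1\mapsto y_2,\ y_2\mapsto y_1$. Let $S_2=\langle\sigma_1\rangle$, $S_2'=\langle\rho_1\rangle$; $\pi_2\colon FVB_2\to S_2$ with $\pi_2(\sigma_1)=\pi_2(\rho_1)=\sigma_1$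 and $FVP_2=\operatorname{Ker}\pi_2$; $\nu_2\colon FVB_2\to S_2'$ with $\nu_2(\sigma_1)=1$, $\nu_2(\rho_1)=\rho_1$ and $FVK_2=\operatorname{Ker}\nu_2$. *)

theory Defs
  imports Main
begin

text \<open>A word over generators of type 'a is a list of letters (g, True) = g and
 (g, False) = g^-1.  Elements of the free group are the reduced words.\<close>

type_synonym 'a fword = "('a \<times> bool) list"

definition fg_invl :: "'a \<times> bool \<Rightarrow> 'a \<times> bool" where
  "fg_invl x = (fst x, \<not> snd x)"

fun fg_reduced :: "'a fword \<Rightarrow> bool" where
  "fg_reduced (x # y # ys) = (y \<noteq> fg_invl x \<and> fg_reduced (y # ys))"
| "fg_reduced _ = True"

fun fg_cancel :: "'a \<times> bool \<Rightarrow> 'a fword \<Rightarrow> 'a fword" where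
  "fg_cancel x [] = [x]"
| "fg_cancel x (y # ys) = (if y = fg_invl x then ys else x # y # ys)"

definition fg_red :: "'a fword \<Rightarrow> 'a fword" where
  "fg_red xs = foldr fg_cancel xs []"

definition fg_mult :: "'a fword \<Rightarrow> 'a fword \<Rightarrow> 'a fword" where
  "fg_mult u v = fg_red (u @ v)"

definition fg_inv :: "'a fword \<Rightarrow> 'a fword" where
  "fg_inv u = rev (map fg_invl u)"

definition fg_gen :: "'a \<Rightarrow> 'a fword" where
  "fg_gen g = [(g, True)]"

definition fg_genpow :: "'a \<Rightarrow> int \<Rightarrow> 'a fword" where
  "fg_genpow g k = (if 0 \<le> k then replicate (nat k) (g, True)
                    else replicate (nat (- k)) (g, False))"

definition fg_subst :: "('a \<Rightarrow> 'b fword) \<Rightarrow> 'a fword \<Rightarrow> 'b fword" where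
  "fg_subst f w = fg_red (concat (map (\<lambda>(a, b). if b then f a else fg_inv (f a)) w))"

datatype ab = GA | GB
datatype gen4 = X1 | X2 | Y1 | Y2

definition w_at_y :: "ab fword \<Rightarrow> gen4 fword" where
  "w_at_y w = fg_subst (\<lambda>a. case a of GA \<Rightarrow> fg_gen Y1 | GB \<Rightarrow> fg_gen Y2) w"

section \<open>FVB_2 = < sigma_1, rho_1 | sigma_1^2 = rho_1^2 = 1 >\<close>

datatype sr = Sig | Rho

fun fvb_reduced :: "sr list \<Rightarrow> bool" where
  "fvb_reduced (x # y # ys) = (x \<noteq> y \<and> fvb_reduced (y # ys))"
| "fvb_reduced _ = True"

definition FVB2 :: "sr list set" where
  "FVB2 = {g. fvb_reduced g}"

fun fvb_cancel :: "sr \<Rightarrow> sr list \<Rightarrow> sr list" where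
  "fvb_cancel x [] = [x]"
| "fvb_cancel x (y # ys) = (if x = y then ys else x # y # ys)"

definition fvb_red :: "sr list \<Rightarrow> sr list" where
  "fvb_red xs = foldr fvb_cancel xs []"

definition fvb_mult :: "sr list \<Rightarrow> sr list \<Rightarrow> sr list" where
  "fvb_mult g h = fvb_red (g @ h)"

definition fvb_inv :: "sr list \<Rightarrow> sr list" where
  "fvb_inv g = rev g"

definition fvb_pow :: "sr list \<Rightarrow> int \<Rightarrow> sr list" where
  "fvb_pow g n = (if 0 \<le> n then (fvb_mult g ^^ nat n) []
                  else (fvb_mult (fvb_inv g) ^^ nat (- n)) [])"

text \<open>pi_2 : FVB_2 -> S_2 (both generators to sigma_1); kernel FVP_2.
  nu_2 : FVB_2 -> S_2' (sigma_1 to 1, rho_1 to rho_1); kernel FVK_2.\<close>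
definition FVP2 :: "sr list set" where
  "FVP2 = {g \<in> FVB2. even (length g)}"

definition FVK2 :: "sr list set" where
  "FVK2 = {g \<in> FVB2. even (length (filter (\<lambda>s. s = Rho) g))}"

definition FVX2 :: "sr list set" where
  "FVX2 = FVP2 \<inter> FVK2"

definition rs_sq :: "sr list" where
  "rs_sq = [Rho, Sig, Rho, Sig]"

definition Theta_img :: "ab fword \<Rightarrow> int \<Rightarrow> sr \<Rightarrow> gen4 \<Rightarrow> gen4 fword" where
  "Theta_img w m s x = (case s of
      Sig \<Rightarrow> (case x of
               X1 \<Rightarrow> fg_mult (fg_gen X2) (w_at_y w)
             | X2 \<Rightarrow> fg_mult (fg_gen X1) (fg_inv (w_at_y w))
             | _ \<Rightarrow> fg_gen x)
    | Rho \<Rightarrow> (case x of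
               X1 \<Rightarrow> fg_mult (fg_gen X2) (fg_genpow Y2 m)
             | X2 \<Rightarrow> fg_mult (fg_gen X1) (fg_genpow Y1 (- m))
             | Y1 \<Rightarrow> fg_gen Y2
             | Y2 \<Rightarrow> fg_gen Y1))"

text \<open>Automorphisms compose left to right: (phi psi)(f) = psi(phi(f)), so the
  image of g = s_1 s_2 ... s_n acts on f by applying Theta(s_1) first.\<close>
definition Theta :: "ab fword \<Rightarrow> int \<Rightarrow> sr list \<Rightarrow> gen4 fword \<Rightarrow> gen4 fword" where
  "Theta w m g f = foldl (\<lambda>h s. fg_subst (Theta_img w m s) h) f g"

definition Theta_ker :: "ab fword \<Rightarrow> int \<Rightarrow> sr list set" where
  "Theta_ker w m = {g \<in> FVB2. \<forall>f. fg_reduced f \<longrightarrow> Theta w m g f = f}"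

definition faithful :: "ab fword \<Rightarrow> int \<Rightarrow> bool" where
  "faithful w m \<longleftrightarrow> (\<forall>g\<in>FVB2. \<forall>h\<in>FVB2.
      (\<forall>f. fg_reduced f \<longrightarrow> Theta w m g f = Theta w m h f) \<longrightarrow> g = h)"

definition alt_word :: "ab \<Rightarrow> ab \<Rightarrow> int list \<Rightarrow> ab fword" where
  "alt_word a b ks = fg_red (concat (map (\<lambda>i. fg_genpow (if even i then a else b) (ks ! i))
                                         [0..<length ks]))"

definition special_word :: "int list \<Rightarrow> int \<Rightarrow> ab fword" where
  "special_word ks m1 = fg_mult (fg_mult (alt_word GA GB ks) (fg_inv (alt_word GB GA ks)))
                                (fg_genpow GA m1)"

end

theory Submission
  imports Defs
begin


lemma invl_invl[simp]: "fg_invl (fg_invl x) = x"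
  by (simp add: fg_invl_def)
lemma invl_neq[simp]: "fg_invl x \<noteq> x" "x \<noteq> fg_invl x"
  by (cases x, simp add: fg_invl_def)+
lemma invl_fst[simp]: "fst (fg_invl x) = fst x"
  by (simp add: fg_invl_def)
lemma invl_eq_iff[simp]: "fg_invl x = fg_invl y \<longleftrightarrow> x = y"
  by (metis invl_invl)

lemma red_Nil[simp]: "fg_red [] = []" by (simp add: fg_red_def)
lemma red_Cons: "fg_red (x # xs) = fg_cancel x (fg_red xs)" by (simp add: fg_red_def)
lemma red_append_foldr: "fg_red (xs @ ys) = foldr fg_cancel xs (fg_red ys)"
  by (simp add: fg_red_def)

lemma reduced_Cons: "fg_reduced (x # xs) \<longleftrightarrow> fg_reduced xs \<and> (xs \<noteq> [] \<longrightarrow> hd xs \<noteq> fg_invl x)"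
  by (cases xs) auto

lemma reduced_tl: "fg_reduced (x # xs) \<Longrightarrow> fg_reduced xs"
  by (simp add: reduced_Cons)

lemma cancel_reduced: "fg_reduced r \<Longrightarrow> fg_reduced (fg_cancel x r)"
  by (cases r) (auto simp: reduced_Cons)

lemma reduced_red[simp]: "fg_reduced (fg_red xs)"
  by (induction xs) (auto simp: red_Cons cancel_reduced)

lemma foldr_cancel_reduced: "fg_reduced zs \<Longrightarrow> fg_reduced (foldr fg_cancel xs zs)"
  by (induction xs) (auto simp: cancel_reduced)

lemma cancel_cancel: "fg_reduced r \<Longrightarrow> fg_cancel x (fg_cancel (fg_invl x) r) = r"
proof (cases r)
  case (Cons y ys)
  assume "fg_reduced r"
  then show ?thesis using Cons
    by (cases ys) (auto simp: reduced_Cons)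
qed simp

lemma red_reduced: "fg_reduced xs \<Longrightarrow> fg_red xs = xs"
proof (induction xs)
  case (Cons x xs)
  then show ?case by (cases xs) (auto simp: red_Cons reduced_Cons)
qed simp

lemma foldr_red: "fg_reduced zs \<Longrightarrow> foldr fg_cancel (fg_red xs) zs = foldr fg_cancel xs zs"
proof (induction xs arbitrary: zs)
  case Nil then show ?case by simp
next
  case (Cons x xs)
  show ?case
  proof (cases "fg_red xs")
    case Nil
    then show ?thesis using Cons by (simp add: red_Cons)
  next
    case (Cons y r')
    show ?thesis
    proof (cases "y = fg_invl x")
      case True
      have "foldr fg_cancel xs zs = foldr fg_cancel (fg_red xs) zs" using Cons.IH Cons.prems by simp
      also have "\<dots> = fg_cancel (fg_invl x) (foldr fg_cancel r' zs)" using Cons True by simp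
      finally have "fg_cancel x (foldr fg_cancel xs zs) = foldr fg_cancel r' zs"
        using cancel_cancel[OF foldr_cancel_reduced[OF Cons.prems]] by simp
      then show ?thesis using Cons True by (simp add: red_Cons)
    next
      case False
      have "foldr fg_cancel xs zs = foldr fg_cancel (fg_red xs) zs" using Cons.IH Cons.prems by simp
      then show ?thesis using Cons False by (simp add: red_Cons)
    qed
  qed
qed

lemma red_red[simp]: "fg_red (fg_red xs) = fg_red xs"
  by (rule red_reduced) simp

lemma red_append_red1[simp]: "fg_red (fg_red xs @ ys) = fg_red (xs @ ys)"
  by (simp add: red_append_foldr foldr_red)

lemma red_append_red2[simp]: "fg_red (xs @ fg_red ys) = fg_red (xs @ ys)"
  by (simp add: red_append_foldr)

lemma inv_append[simp]: "fg_inv (xs @ ys) = fg_inv ys @ fg_inv xs"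
  by (simp add: fg_inv_def)
lemma inv_inv[simp]: "fg_inv (fg_inv xs) = xs"
  by (simp add: fg_inv_def rev_map comp_def)
lemma inv_Nil[simp]: "fg_inv [] = []" by (simp add: fg_inv_def)
lemma inv_Cons: "fg_inv (x # xs) = fg_inv xs @ [fg_invl x]" by (simp add: fg_inv_def)
lemma inv_single[simp]: "fg_inv [x] = [fg_invl x]" by (simp add: fg_inv_def)

lemma red_cancel_l: "fg_red (xs @ fg_inv xs @ ys) = fg_red ys"
proof (induction xs rule: rev_induct)
  case Nil then show ?case by simp
next
  case (snoc x xs)
  have "fg_red ((xs @ [x]) @ fg_inv (xs @ [x]) @ ys) = fg_red (xs @ ([x] @ [fg_invl x] @ fg_inv xs @ ys))"
    by (simp add: fg_inv_def)
  also have "\<dots> = fg_red (xs @ fg_red ([x] @ [fg_invl x] @ fg_inv xs @ ys))" by (simp only: red_append_red2)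
  also have "fg_red ([x] @ [fg_invl x] @ fg_inv xs @ ys) = fg_red (fg_inv xs @ ys)"
    using cancel_cancel[OF reduced_red, of x] by (simp add: red_Cons)
  finally show ?case using snoc by (simp only: red_append_red2)
qed

lemma red_cancel_r: "fg_red (fg_inv xs @ xs @ ys) = fg_red ys"
  using red_cancel_l[of "fg_inv xs" ys] by simp

lemma red_inv_self[simp]: "fg_red (xs @ fg_inv xs) = []" "fg_red (fg_inv xs @ xs) = []"
  using red_cancel_l[of xs "[]"] red_cancel_r[of xs "[]"] by simp_all


lemma reduced_append: "fg_reduced (a @ b) \<longleftrightarrow> fg_reduced a \<and> fg_reduced b \<and> (a \<noteq> [] \<and> b \<noteq> [] \<longrightarrow> hd b \<noteq> fg_invl (last a))"
proof (induction a)
  case (Cons x a)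
  then show ?case by (cases a) (auto simp: reduced_Cons)
qed simp

lemma reduced_inv: "fg_reduced u \<Longrightarrow> fg_reduced (fg_inv u)"
proof (induction u)
  case (Cons x u)
  then show ?case
    by (cases u) (auto simp: inv_Cons reduced_append reduced_Cons fg_inv_def last_rev hd_map)
qed simp

lemma uniq_inv: "fg_red (a @ b) = [] \<Longrightarrow> fg_red b = fg_red (fg_inv a)"
proof -
  assume h: "fg_red (a @ b) = []"
  have "fg_red b = fg_red (fg_inv a @ a @ b)" by (simp add: red_cancel_r)
  also have "\<dots> = fg_red (fg_inv a @ fg_red (a @ b))" by simp
  finally show ?thesis using h by simp
qed

lemma red_inv_red: "fg_red (fg_inv (fg_red a)) = fg_red (fg_inv a)"
proof -
  have "fg_red (fg_red a @ fg_inv a) = []" by simp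
  from uniq_inv[OF this] show ?thesis by simp
qed

lemma red_inv: "fg_red (fg_inv a) = fg_inv (fg_red a)"
  using red_inv_red[of a] red_reduced[OF reduced_inv[OF reduced_red[of a]]] by simp

lemma red_nil_inv: "fg_red (fg_inv a) = [] \<longleftrightarrow> fg_red a = []"
  by (simp only: red_inv) (simp add: fg_inv_def)

lemma red_rotate: "fg_red (a @ b) = [] \<Longrightarrow> fg_red (b @ a) = []"
proof -
  assume h: "fg_red (a @ b) = []"
  have "fg_red (b @ a) = fg_red (fg_red b @ a)" by simp
  also have "\<dots> = fg_red (fg_red (fg_inv a) @ a)" using uniq_inv[OF h] by simp
  finally show ?thesis by simp
qed

definition phi :: "('a \<Rightarrow> 'b fword) \<Rightarrow> 'a \<times> bool \<Rightarrow> 'b fword" where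
  "phi f = (\<lambda>(a, b). if b then f a else fg_inv (f a))"

definition psi :: "('a \<Rightarrow> 'b fword) \<Rightarrow> 'a fword \<Rightarrow> 'b fword" where
  "psi f w = concat (map (phi f) w)"

lemma subst_psi: "fg_subst f w = fg_red (psi f w)"
  by (simp add: fg_subst_def psi_def phi_def)

lemma psi_append[simp]: "psi f (a @ b) = psi f a @ psi f b" by (simp add: psi_def)
lemma psi_Nil[simp]: "psi f [] = []" by (simp add: psi_def)
lemma psi_Cons: "psi f (x # a) = phi f x @ psi f a" by (simp add: psi_def)

lemma phi_invl: "phi f (fg_invl x) = fg_inv (phi f x)"
  by (cases x) (simp add: phi_def fg_invl_def)

lemma inv_concat: "fg_inv (concat L) = concat (rev (map fg_inv L))"
  by (induction L) auto

lemma psi_inv: "psi f (fg_inv a) = fg_inv (psi f a)"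
  by (induction a) (auto simp: inv_Cons psi_Cons phi_invl)

lemma psi_red: "fg_red (psi f (fg_red u)) = fg_red (psi f u)"
proof (induction u)
  case Nil then show ?case by simp
next
  case (Cons x u)
  have "fg_red (psi f (x # u)) = fg_red (phi f x @ fg_red (psi f u))" by (simp add: psi_Cons)
  also have "\<dots> = fg_red (phi f x @ psi f (fg_red u))" using Cons.IH
    by (metis red_append_red2)
  finally have e: "fg_red (psi f (x # u)) = fg_red (phi f x @ psi f (fg_red u))" .
  show ?case
  proof (cases "fg_red u")
    case Nil
    then show ?thesis using e by (simp add: red_Cons psi_Cons)
  next
    case (Cons y r')
    show ?thesis
    proof (cases "y = fg_invl x")
      case True
      have "fg_red (phi f x @ psi f (fg_red u)) = fg_red (phi f x @ fg_inv (phi f x) @ psi f r')"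
        using Cons True by (simp add: psi_Cons phi_invl)
      also have "\<dots> = fg_red (psi f r')" by (rule red_cancel_l)
      finally show ?thesis using e Cons True by (simp add: red_Cons)
    next
      case False
      then show ?thesis using e Cons by (simp add: red_Cons psi_Cons)
    qed
  qed
qed

lemma subst_red[simp]: "fg_subst f (fg_red u) = fg_subst f u"
  by (simp add: subst_psi psi_red)

lemma subst_append: "fg_subst f (a @ b) = fg_red (fg_subst f a @ fg_subst f b)"
  by (simp add: subst_psi)

lemma subst_inv: "fg_subst f (fg_inv a) = fg_inv (fg_subst f a)"
  by (simp add: subst_psi psi_inv red_inv)

lemma subst_mult: "fg_subst f (fg_mult a b) = fg_mult (fg_subst f a) (fg_subst f b)"
  by (simp add: fg_mult_def subst_append)

lemma subst_reduced[simp]: "fg_reduced (fg_subst f w)"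
  by (simp add: fg_subst_def)

lemma mult_reduced[simp]: "fg_reduced (fg_mult a b)"
  by (simp add: fg_mult_def)

lemma red_concat_cong:
  "(\<And>x. x \<in> set w \<Longrightarrow> fg_red (g1 x) = fg_red (g2 x)) \<Longrightarrow>
    fg_red (concat (map g1 w)) = fg_red (concat (map g2 w))"
proof (induction w)
  case (Cons x w)
  have "fg_red (concat (map g1 (x # w))) = fg_red (fg_red (g1 x) @ fg_red (concat (map g1 w)))" by simp
  also have "\<dots> = fg_red (fg_red (g2 x) @ fg_red (concat (map g2 w)))" using Cons by simp
  finally show ?case by simp
qed simp

lemma psi_concat: "psi g (concat L) = concat (map (psi g) L)"
  by (induction L) auto

lemma subst_comp: "fg_subst g (fg_subst f w) = fg_subst (\<lambda>a. fg_subst g (f a)) w"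
proof -
  have "fg_subst g (fg_subst f w) = fg_red (psi g (psi f w))"
    by (simp add: subst_psi[of f] subst_psi[of g] psi_red)
  also have "psi g (psi f w) = concat (map (\<lambda>x. psi g (phi f x)) w)"
    by (simp add: psi_def[of f] psi_concat map_map comp_def)
  also have "fg_red \<dots> = fg_red (concat (map (phi (\<lambda>a. fg_subst g (f a))) w))"
  proof (rule red_concat_cong)
    fix x show "fg_red (psi g (phi f x)) = fg_red (phi (\<lambda>a. fg_subst g (f a)) x)"
      by (cases x) (auto simp: phi_def subst_psi psi_inv red_inv)
  qed
  finally show ?thesis by (simp add: subst_psi psi_def)
qed

lemma subst_gen: "fg_subst f [(a, True)] = fg_red (f a)"
  by (simp add: fg_subst_def)

lemma subst_fg_gen[simp]: "fg_subst f (fg_gen a) = fg_red (f a)"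
  by (simp add: fg_gen_def subst_gen)

lemma subst_id: "(\<And>x. x \<in> set u \<Longrightarrow> f (fst x) = [(fst x, True)]) \<Longrightarrow> fg_subst f u = fg_red u"
proof -
  assume h: "\<And>x. x \<in> set u \<Longrightarrow> f (fst x) = [(fst x, True)]"
  have "psi f u = u" using h
  proof (induction u)
    case (Cons x u)
    have "f (fst x) = [(fst x, True)]" using Cons.prems by simp
    then have "phi f x = [x]" by (cases x) (auto simp: phi_def fg_invl_def)
    then show ?case using Cons by (simp add: psi_Cons)
  qed simp
  then show ?thesis by (simp add: subst_psi)
qed

lemma genpow_inv: "fg_inv (fg_genpow a k) = fg_genpow a (- k)"
  by (auto simp: fg_genpow_def fg_inv_def fg_invl_def)

lemma genpow_reduced[simp]: "fg_reduced (fg_genpow a k)"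
proof -
  have "fg_reduced (replicate n (a, b))" for n b
    by (induction n) (auto simp: reduced_Cons fg_invl_def)
  then show ?thesis by (simp add: fg_genpow_def)
qed

lemma subst_genpow: "f a = [(b, True)] \<Longrightarrow> fg_subst f (fg_genpow a k) = fg_genpow b k"
proof -
  assume h: "f a = [(b, True)]"
  have "psi f (replicate n (a, c)) = replicate n (b, c)" for n c
    using h by (induction n) (auto simp: psi_Cons phi_def fg_invl_def)
  then have "psi f (fg_genpow a k) = fg_genpow b k" by (simp add: fg_genpow_def)
  then show ?thesis by (simp add: subst_psi red_reduced)
qed

definition ren :: "('a \<Rightarrow> 'b) \<Rightarrow> 'a fword \<Rightarrow> 'b fword" where
  "ren r u = map (\<lambda>(a, b). (r a, b)) u"

lemma ren_append[simp]: "ren r (a @ b) = ren r a @ ren r b" by (simp add: ren_def)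
lemma ren_Nil[simp]: "ren r [] = []" by (simp add: ren_def)
lemma ren_inv: "ren r (fg_inv u) = fg_inv (ren r u)"
  by (simp add: ren_def fg_inv_def rev_map fg_invl_def split_def)

lemma red_ren: "inj r \<Longrightarrow> fg_red (ren r u) = ren r (fg_red u)"
proof (induction u)
  case Nil then show ?case by simp
next
  case (Cons x u)
  show ?case
  proof (cases "fg_red u")
    case Nil then show ?thesis using Cons by (simp add: red_Cons ren_def split_def)
  next
    case (Cons y r')
    have "(r (fst y), snd y) = fg_invl (r (fst x), snd x) \<longleftrightarrow> y = fg_invl x"
      using \<open>inj r\<close> by (cases x, cases y) (auto simp: fg_invl_def inj_eq)
    then show ?thesis using Cons Cons.IH Cons.prems by (auto simp: red_Cons ren_def split_def)
  qed
qed

lemma subst_ren: "(\<And>a. f a = [(r a, True)]) \<Longrightarrow> fg_subst f u = fg_red (ren r u)"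
proof -
  assume h: "\<And>a. f a = [(r a, True)]"
  have "psi f u = ren r u" using h
    by (induction u) (auto simp: psi_Cons phi_def fg_invl_def ren_def)
  then show ?thesis by (simp add: subst_psi)
qed

lemma ren_reduced: "inj r \<Longrightarrow> fg_reduced u \<Longrightarrow> fg_reduced (ren r u)"
  by (metis red_reduced red_ren reduced_red)

lemma ren_genpow: "ren r (fg_genpow a k) = fg_genpow (r a) k"
  by (simp add: ren_def fg_genpow_def)

lemma ren_inj: "inj r \<Longrightarrow> ren r u = ren r v \<Longrightarrow> u = v"
proof -
  assume a: "inj r" and e: "ren r u = ren r v"
  have "inj (\<lambda>(a::'a, b::bool). (r a, b))" using a by (auto simp: inj_def)
  then show "u = v" using e unfolding ren_def by (metis list.inj_map injD)
qed


section \<open>FVB2 reduction\<close>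

lemma fvb_reduced_Cons: "fvb_reduced (x # xs) \<longleftrightarrow> fvb_reduced xs \<and> (xs \<noteq> [] \<longrightarrow> hd xs \<noteq> x)"
  by (cases xs) auto

lemma fvb_red_Nil[simp]: "fvb_red [] = []" by (simp add: fvb_red_def)
lemma fvb_red_Cons: "fvb_red (x # xs) = fvb_cancel x (fvb_red xs)" by (simp add: fvb_red_def)
lemma fvb_red_append_foldr: "fvb_red (xs @ ys) = foldr fvb_cancel xs (fvb_red ys)"
  by (simp add: fvb_red_def)

lemma fvb_cancel_reduced: "fvb_reduced r \<Longrightarrow> fvb_reduced (fvb_cancel x r)"
  by (cases r) (auto simp: fvb_reduced_Cons)

lemma fvb_reduced_red[simp]: "fvb_reduced (fvb_red xs)"
  by (induction xs) (auto simp: fvb_red_Cons fvb_cancel_reduced)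

lemma fvb_foldr_reduced: "fvb_reduced zs \<Longrightarrow> fvb_reduced (foldr fvb_cancel xs zs)"
  by (induction xs) (auto simp: fvb_cancel_reduced)

lemma fvb_cancel_cancel: "fvb_reduced r \<Longrightarrow> fvb_cancel x (fvb_cancel x r) = r"
proof (cases r)
  case (Cons y ys)
  assume "fvb_reduced r"
  then show ?thesis using Cons
    by (cases ys) (auto simp: fvb_reduced_Cons)
qed simp

lemma fvb_red_reduced: "fvb_reduced xs \<Longrightarrow> fvb_red xs = xs"
proof (induction xs)
  case (Cons x xs)
  then show ?case by (cases xs) (auto simp: fvb_red_Cons fvb_reduced_Cons)
qed simp

lemma fvb_foldr_red: "fvb_reduced zs \<Longrightarrow> foldr fvb_cancel (fvb_red xs) zs = foldr fvb_cancel xs zs"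
proof (induction xs arbitrary: zs)
  case Nil then show ?case by simp
next
  case (Cons x xs)
  have ih: "foldr fvb_cancel xs zs = foldr fvb_cancel (fvb_red xs) zs" using Cons.IH Cons.prems by simp
  show ?case
  proof (cases "fvb_red xs")
    case Nil
    then show ?thesis using ih by (simp add: fvb_red_Cons)
  next
    case (Cons y r')
    show ?thesis
    proof (cases "y = x")
      case True
      have "fvb_cancel x (foldr fvb_cancel xs zs) = foldr fvb_cancel r' zs"
        using ih Cons True fvb_cancel_cancel[OF fvb_foldr_reduced[OF \<open>fvb_reduced zs\<close>]] by simp
      then show ?thesis using Cons True by (simp add: fvb_red_Cons)
    next
      case False
      then show ?thesis using Cons ih by (simp add: fvb_red_Cons)
    qed
  qed
qed

lemma fvb_red_red[simp]: "fvb_red (fvb_red xs) = fvb_red xs"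
  by (rule fvb_red_reduced) simp

lemma fvb_red_append_red1[simp]: "fvb_red (fvb_red xs @ ys) = fvb_red (xs @ ys)"
  by (simp add: fvb_red_append_foldr fvb_foldr_red)

lemma fvb_red_append_red2[simp]: "fvb_red (xs @ fvb_red ys) = fvb_red (xs @ ys)"
  by (simp add: fvb_red_append_foldr)

lemma fvb_red_cancel: "fvb_red (xs @ rev xs @ ys) = fvb_red ys"
proof (induction xs rule: rev_induct)
  case Nil then show ?case by simp
next
  case (snoc x xs)
  have "fvb_red ((xs @ [x]) @ rev (xs @ [x]) @ ys) = fvb_red (xs @ fvb_red ([x] @ [x] @ rev xs @ ys))"
    by simp
  also have "fvb_red ([x] @ [x] @ rev xs @ ys) = fvb_red (rev xs @ ys)"
    using fvb_cancel_cancel[OF fvb_reduced_red, of x] by (simp add: fvb_red_Cons)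
  finally show ?case using snoc by (simp only: fvb_red_append_red2)
qed

lemma fvb_red_self[simp]: "fvb_red (xs @ rev xs) = []"
  using fvb_red_cancel[of xs "[]"] by simp

lemma fvb_eq: "fvb_reduced g \<Longrightarrow> fvb_reduced h \<Longrightarrow> fvb_red (g @ rev h) = [] \<Longrightarrow> g = h"
proof -
  assume g: "fvb_reduced g" and h: "fvb_reduced h" and e: "fvb_red (g @ rev h) = []"
  have "g = fvb_red (g @ rev h @ h)"
    using fvb_red_cancel[of "rev h" "[]"] g
    by (metis append.right_neutral fvb_red_append_red2 fvb_red_reduced rev_rev_ident)
  also have "\<dots> = fvb_red (fvb_red (g @ rev h) @ h)" by simp
  also have "\<dots> = h" using e h by (simp add: fvb_red_reduced)
  finally show ?thesis .
qed

lemma Theta_Nil[simp]: "Theta w m [] f = f" by (simp add: Theta_def)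
lemma Theta_Cons: "Theta w m (s # g) f = Theta w m g (fg_subst (Theta_img w m s) f)"
  by (simp add: Theta_def)
lemma Theta_append: "Theta w m (g @ h) f = Theta w m h (Theta w m g f)"
  by (simp add: Theta_def)
lemma Theta_snoc: "Theta w m (g @ [s]) f = fg_subst (Theta_img w m s) (Theta w m g f)"
  by (simp add: Theta_def)

lemma Theta_reduced: "fg_reduced f \<Longrightarrow> fg_reduced (Theta w m g f)"
  by (induction g rule: rev_induct) (auto simp: Theta_snoc)

definition wy2 :: "ab fword \<Rightarrow> gen4 fword" where
  "wy2 w = fg_subst (\<lambda>a. case a of GA \<Rightarrow> fg_gen Y2 | GB \<Rightarrow> fg_gen Y1) w"

lemma red_mult[simp]: "fg_red (fg_mult a b) = fg_mult a b"
  by (simp add: fg_mult_def)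

lemma red_gen[simp]: "fg_red (fg_gen a) = fg_gen a"
  by (simp add: fg_gen_def red_Cons)

lemma TS_W[simp]: "fg_subst (Theta_img w m Sig) (w_at_y w) = w_at_y w"
  unfolding w_at_y_def subst_comp
  by (rule arg_cong[where f="\<lambda>f. fg_subst f w"]) (auto simp: Theta_img_def split: ab.splits)

lemma TS_W2[simp]: "fg_subst (Theta_img w m Sig) (wy2 w) = wy2 w"
  unfolding wy2_def subst_comp
  by (rule arg_cong[where f="\<lambda>f. fg_subst f w"]) (auto simp: Theta_img_def split: ab.splits)

lemma TR_W[simp]: "fg_subst (Theta_img w m Rho) (w_at_y w) = wy2 w"
  unfolding w_at_y_def wy2_def subst_comp
  by (rule arg_cong[where f="\<lambda>f. fg_subst f w"]) (auto simp: Theta_img_def split: ab.splits)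

lemma TR_W2[simp]: "fg_subst (Theta_img w m Rho) (wy2 w) = w_at_y w"
  unfolding w_at_y_def wy2_def subst_comp
  by (rule arg_cong[where f="\<lambda>f. fg_subst f w"]) (auto simp: Theta_img_def split: ab.splits)

lemma T_Y[simp]:
  "Theta_img w m Sig Y1 = [(Y1, True)]" "Theta_img w m Sig Y2 = [(Y2, True)]"
  "Theta_img w m Rho Y1 = [(Y2, True)]" "Theta_img w m Rho Y2 = [(Y1, True)]"
  by (simp_all add: Theta_img_def fg_gen_def)

lemma T_X:
  "Theta_img w m Sig X1 = fg_mult (fg_gen X2) (w_at_y w)"
  "Theta_img w m Sig X2 = fg_mult (fg_gen X1) (fg_inv (w_at_y w))"
  "Theta_img w m Rho X1 = fg_mult (fg_gen X2) (fg_genpow Y2 m)"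
  "Theta_img w m Rho X2 = fg_mult (fg_gen X1) (fg_inv (fg_genpow Y1 m))"
  by (simp_all add: Theta_img_def genpow_inv)

lemma T_genpow[simp]:
  "fg_subst (Theta_img w m Sig) (fg_genpow Y1 k) = fg_genpow Y1 k"
  "fg_subst (Theta_img w m Sig) (fg_genpow Y2 k) = fg_genpow Y2 k"
  "fg_subst (Theta_img w m Rho) (fg_genpow Y1 k) = fg_genpow Y2 k"
  "fg_subst (Theta_img w m Rho) (fg_genpow Y2 k) = fg_genpow Y1 k"
  by (simp_all add: subst_genpow)

lemma red_cancel_mid[simp]:
  "fg_red (xs @ ys @ fg_inv ys @ zs) = fg_red (xs @ zs)"
  "fg_red (xs @ fg_inv ys @ ys @ zs) = fg_red (xs @ zs)"
  "fg_red (xs @ ys @ fg_inv ys) = fg_red xs"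
  "fg_red (xs @ fg_inv ys @ ys) = fg_red xs"
proof -
  show "fg_red (xs @ ys @ fg_inv ys @ zs) = fg_red (xs @ zs)"
    by (metis red_append_red2 red_cancel_l)
  show "fg_red (xs @ fg_inv ys @ ys @ zs) = fg_red (xs @ zs)"
    by (metis red_append_red2 red_cancel_r)
  show "fg_red (xs @ ys @ fg_inv ys) = fg_red xs"
    by (metis append.right_neutral red_append_red2 red_cancel_l)
  show "fg_red (xs @ fg_inv ys @ ys) = fg_red xs"
    by (metis append.right_neutral red_append_red2 red_cancel_r)
qed

lemmas calc1 = subst_mult subst_inv subst_fg_gen T_X T_Y red_mult red_gen TS_W TS_W2 TR_W TR_W2
  T_genpow subst_gen
lemmas calc2 = fg_mult_def append_assoc red_append_red1 red_append_red2 red_cancel_mid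

lemma TT_id: "fg_reduced f \<Longrightarrow> fg_subst (Theta_img w m s) (fg_subst (Theta_img w m s) f) = f"
proof -
  assume f: "fg_reduced f"
  have "(\<lambda>a. fg_subst (Theta_img w m s) (Theta_img w m s a)) = (\<lambda>a. [(a, True)])"
  proof
    fix a show "fg_subst (Theta_img w m s) (Theta_img w m s a) = [(a, True)]"
      by (cases s; cases a) (simp_all only: calc1, simp_all add: calc2, simp_all add: fg_gen_def red_Cons)
  qed
  then show ?thesis using f by (simp add: subst_comp subst_id red_reduced)
qed


lemma Theta_red: "fg_reduced f \<Longrightarrow> Theta w m g f = Theta w m (fvb_red g) f"
proof (induction g arbitrary: f)
  case Nil then show ?case by simp
next
  case (Cons s g)
  have ih: "Theta w m g (fg_subst (Theta_img w m s) f) = Theta w m (fvb_red g) (fg_subst (Theta_img w m s) f)"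
    using Cons.IH by simp
  show ?case
  proof (cases "fvb_red g")
    case Nil then show ?thesis using ih by (simp add: Theta_Cons fvb_red_Cons)
  next
    case (Cons y r)
    show ?thesis
    proof (cases "y = s")
      case True
      then show ?thesis using ih Cons \<open>fg_reduced f\<close> by (simp add: Theta_Cons fvb_red_Cons TT_id)
    next
      case False
      then show ?thesis using ih Cons by (simp add: Theta_Cons fvb_red_Cons)
    qed
  qed
qed

lemma not_faithful_iff: "\<not> faithful w m \<longleftrightarrow> (\<exists>g\<in>Theta_ker w m. g \<noteq> [])"
proof
  assume "\<not> faithful w m"
  then obtain g h where g: "g \<in> FVB2" and h: "h \<in> FVB2" and gh: "g \<noteq> h"
    and eq: "\<And>f. fg_reduced f \<Longrightarrow> Theta w m g f = Theta w m h f"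
    unfolding faithful_def by blast
  let ?k = "fvb_red (g @ rev h)"
  have "?k \<noteq> []" using fvb_eq g h gh by (auto simp: FVB2_def)
  moreover have "?k \<in> Theta_ker w m"
  proof -
    have "Theta w m ?k f = f" if f: "fg_reduced f" for f
    proof -
      have "Theta w m ?k f = Theta w m (g @ rev h) f" using Theta_red[OF f] by simp
      also have "\<dots> = Theta w m (rev h) (Theta w m h f)" by (simp add: Theta_append eq[OF f])
      also have "\<dots> = Theta w m (h @ rev h) f" by (simp add: Theta_append)
      also have "\<dots> = Theta w m (fvb_red (h @ rev h)) f" by (rule Theta_red[OF f])
      finally show ?thesis by simp
    qed
    then show ?thesis by (auto simp: Theta_ker_def FVB2_def)
  qed
  ultimately show "\<exists>g\<in>Theta_ker w m. g \<noteq> []" by blast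
next
  assume "\<exists>g\<in>Theta_ker w m. g \<noteq> []"
  then obtain g where k: "g \<in> Theta_ker w m" and ne: "g \<noteq> []" by blast
  have a: "g \<in> FVB2" "[] \<in> FVB2" "\<forall>f. fg_reduced f \<longrightarrow> Theta w m g f = Theta w m [] f"
    using k by (auto simp: Theta_ker_def FVB2_def)
  show "\<not> faithful w m" unfolding faithful_def using a ne by blast
qed

lemma Theta_subst: "fg_reduced f \<Longrightarrow> Theta w m g f = fg_subst (\<lambda>a. Theta w m g [(a, True)]) f"
proof (induction g arbitrary: f)
  case Nil
  then show ?case by (simp add: subst_id red_reduced)
next
  case (Cons s g)
  have r: "fg_reduced (Theta_img w m s a)" for a
    by (cases s; cases a) (simp_all add: Theta_img_def fg_gen_def)
  have "Theta w m (s # g) f = fg_subst (\<lambda>a. Theta w m g [(a, True)]) (fg_subst (Theta_img w m s) f)"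
    by (simp only: Theta_Cons Cons.IH[OF subst_reduced])
  also have "\<dots> = fg_subst (\<lambda>a. fg_subst (\<lambda>a. Theta w m g [(a, True)]) (Theta_img w m s a)) f"
    by (simp add: subst_comp)
  also have "(\<lambda>a. fg_subst (\<lambda>a. Theta w m g [(a, True)]) (Theta_img w m s a)) = (\<lambda>a. Theta w m (s # g) [(a, True)])"
  proof
    fix a
    have "Theta w m (s # g) [(a, True)] = Theta w m g (Theta_img w m s a)"
      by (simp add: Theta_Cons subst_gen red_reduced[OF r])
    then show "fg_subst (\<lambda>a. Theta w m g [(a, True)]) (Theta_img w m s a) = Theta w m (s # g) [(a, True)]"
      using Cons.IH[OF r] by simp
  qed
  finally show ?case .
qed

lemma ker_iff: "g \<in> Theta_ker w m \<longleftrightarrow> g \<in> FVB2 \<and> (\<forall>a. Theta w m g [(a, True)] = [(a, True)])"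
proof
  assume "g \<in> Theta_ker w m"
  then show "g \<in> FVB2 \<and> (\<forall>a. Theta w m g [(a, True)] = [(a, True)])"
    by (auto simp: Theta_ker_def)
next
  assume h: "g \<in> FVB2 \<and> (\<forall>a. Theta w m g [(a, True)] = [(a, True)])"
  have "Theta w m g f = f" if "fg_reduced f" for f
    using that h by (simp add: Theta_subst[OF that] subst_id red_reduced)
  then show "g \<in> Theta_ker w m" using h by (simp add: Theta_ker_def)
qed

definition rhoc :: "sr list \<Rightarrow> nat" where "rhoc g = length (filter (\<lambda>s. s = Rho) g)"

lemma Theta_Y:
  "Theta w m g [(Y1, True)] = [(if even (rhoc g) then Y1 else Y2, True)] \<and>
   Theta w m g [(Y2, True)] = [(if even (rhoc g) then Y2 else Y1, True)]"
proof (induction g rule: rev_induct)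
  case Nil then show ?case by (simp add: rhoc_def)
next
  case (snoc s g)
  show ?case using snoc
    by (cases s; cases "even (rhoc g)") (simp_all add: rhoc_def Theta_snoc subst_gen red_Cons)
qed

definition yonly :: "gen4 fword \<Rightarrow> bool" where
  "yonly u \<longleftrightarrow> (\<forall>x\<in>set u. fst x = Y1 \<or> fst x = Y2)"

lemma yonly_append[simp]: "yonly (a @ b) \<longleftrightarrow> yonly a \<and> yonly b"
  by (auto simp: yonly_def)
lemma yonly_inv[simp]: "yonly (fg_inv a) \<longleftrightarrow> yonly a"
  by (auto simp: yonly_def fg_inv_def)
lemma yonly_Nil[simp]: "yonly []" by (simp add: yonly_def)

lemma set_cancel: "set (fg_cancel x r) \<subseteq> insert x (set r)"
  by (cases r) auto

lemma set_red: "set (fg_red u) \<subseteq> set u"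
  apply (induction u)
   apply simp
  apply (simp add: red_Cons)
  using set_cancel by blast

lemma yonly_red: "yonly a \<Longrightarrow> yonly (fg_red a)"
  using set_red unfolding yonly_def by blast

lemma yonly_psi: "yonly u \<Longrightarrow> (\<And>a. a = Y1 \<or> a = Y2 \<Longrightarrow> yonly (f a)) \<Longrightarrow> yonly (psi f u)"
proof (induction u)
  case (Cons x u)
  have "fst x = Y1 \<or> fst x = Y2" using Cons.prems(1) by (simp add: yonly_def)
  then have "yonly (phi f x)" using Cons.prems(2) by (cases x) (auto simp: phi_def)
  moreover have "yonly u" using Cons.prems(1) by (simp add: yonly_def)
  ultimately show ?case using Cons.IH[OF _ Cons.prems(2)] by (simp add: psi_Cons)
qed simp

lemma yonly_psi_all: "(\<And>a. yonly (f a)) \<Longrightarrow> yonly (psi f u)"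
proof (induction u)
  case (Cons x u)
  have "yonly (phi f x)" using Cons.prems by (cases x) (auto simp: phi_def)
  then show ?case using Cons by (simp add: psi_Cons)
qed simp

lemma yonly_subst: "yonly u \<Longrightarrow> (\<And>a. a = Y1 \<or> a = Y2 \<Longrightarrow> yonly (f a)) \<Longrightarrow> yonly (fg_subst f u)"
  by (simp add: subst_psi yonly_red yonly_psi)

lemma yonly_genpow: "a = Y1 \<or> a = Y2 \<Longrightarrow> yonly (fg_genpow a k)"
  by (auto simp: yonly_def fg_genpow_def)

lemma yonly_W[simp]: "yonly (w_at_y w)" "yonly (wy2 w)"
  unfolding w_at_y_def wy2_def subst_psi
  by (rule yonly_red, rule yonly_psi_all, simp add: yonly_def fg_gen_def split: ab.splits)+

definition xflip :: "gen4 \<Rightarrow> gen4" where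
  "xflip a = (case a of X1 \<Rightarrow> X2 | X2 \<Rightarrow> X1 | _ \<Rightarrow> a)"

lemma T_X_form: "a = X1 \<or> a = X2 \<Longrightarrow> \<exists>Q. yonly Q \<and> Theta_img w m s a = fg_red ((xflip a, True) # Q)"
proof -
  assume a: "a = X1 \<or> a = X2"
  show ?thesis
  proof (cases s)
    case Sig
    then show ?thesis using a
      by (auto simp: Theta_img_def fg_mult_def fg_gen_def xflip_def
          intro: exI[of _ "w_at_y w"] exI[of _ "fg_inv (w_at_y w)"])
  next
    case Rho
    then show ?thesis using a
      by (auto simp: Theta_img_def fg_mult_def fg_gen_def xflip_def yonly_genpow
          intro: exI[of _ "fg_genpow Y2 m"] exI[of _ "fg_genpow Y1 (- m)"])
  qed
qed

lemma Theta_X: "a = X1 \<or> a = X2 \<Longrightarrow>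
  \<exists>P. yonly P \<and> Theta w m g [(a, True)] = fg_red (((xflip ^^ length g) a, True) # P)"
proof (induction g rule: rev_induct)
  case Nil then show ?case by (auto intro!: exI[of _ "[]"] simp: red_Cons)
next
  case (snoc s g)
  obtain P where P: "yonly P" "Theta w m g [(a, True)] = fg_red (((xflip ^^ length g) a, True) # P)"
    using snoc by blast
  let ?b = "(xflip ^^ length g) a"
  have b: "?b = X1 \<or> ?b = X2" using snoc.prems
    by (induction g rule: rev_induct) (auto simp: xflip_def)
  obtain Q where Q: "yonly Q" "Theta_img w m s ?b = fg_red ((xflip ?b, True) # Q)"
    using T_X_form[OF b] by blast
  have yP: "yonly (fg_subst (Theta_img w m s) P)"
    by (rule yonly_subst[OF P(1)]) (cases s, auto simp: yonly_def)
  have "Theta w m (g @ [s]) [(a, True)] = fg_subst (Theta_img w m s) ([(?b, True)] @ P)"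
    using P by (simp add: Theta_snoc)
  also have "\<dots> = fg_red (fg_red ((xflip ?b, True) # Q) @ fg_subst (Theta_img w m s) P)"
    by (simp only: subst_append subst_gen Q(2) red_red)
  also have "\<dots> = fg_red ((xflip ?b, True) # (Q @ fg_subst (Theta_img w m s) P))"
    by simp
  finally show ?case using Q(1) yP by (auto intro!: exI[of _ "Q @ fg_subst (Theta_img w m s) P"])
qed

lemma xflip_pow: "(xflip ^^ n) X1 = (if even n then X1 else X2)"
  by (induction n) (auto simp: xflip_def)

lemma red_letter_yonly: "yonly P \<Longrightarrow> fg_red ((b, True) # P) = [(X1, True)] \<Longrightarrow> b = X1"
proof (rule ccontr)
  assume y: "yonly P" and e: "fg_red ((b, True) # P) = [(X1, True)]" and ne: "b \<noteq> X1"
  have "fg_red P = fg_red ([(b, False)] @ [(b, True)] @ P)"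
    using red_cancel_r[of "[(b, True)]" P] by (simp add: fg_invl_def)
  also have "\<dots> = fg_red ([(b, False)] @ fg_red ((b, True) # P))" by (metis append_Cons append_Nil red_append_red2)
  also have "\<dots> = [(b, False), (X1, True)]" using e ne
    by (simp add: red_Cons fg_invl_def)
  finally have "(X1, True) \<in> set (fg_red P)" by simp
  then show False using yonly_red[OF y] by (auto simp: yonly_def)
qed

lemma ker_FVX2: "g \<in> Theta_ker w m \<Longrightarrow> g \<in> FVX2"
proof -
  assume k: "g \<in> Theta_ker w m"
  then have g: "g \<in> FVB2" and t: "\<And>a. Theta w m g [(a, True)] = [(a, True)]" by (auto simp: ker_iff)
  have "even (rhoc g)" using t[of Y1] Theta_Y[of w m g] by (auto split: if_splits)
  moreover obtain P where "yonly P" "Theta w m g [(X1, True)] = fg_red (((xflip ^^ length g) X1, True) # P)"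
    using Theta_X[of X1] by blast
  then have "(xflip ^^ length g) X1 = X1" using red_letter_yonly t[of X1] by metis
  then have "even (length g)" by (simp add: xflip_pow split: if_splits)
  ultimately show ?thesis using g by (simp add: FVX2_def FVP2_def FVK2_def rhoc_def)
qed


definition pw :: "'a list \<Rightarrow> nat \<Rightarrow> 'a list" where "pw L k = concat (replicate k L)"

lemma pw_0[simp]: "pw L 0 = []" by (simp add: pw_def)
lemma pw_Suc: "pw L (Suc k) = L @ pw L k" by (simp add: pw_def)
lemma pw_Suc2: "pw L (Suc k) = pw L k @ L" by (simp add: pw_def replicate_append_same[symmetric])
lemma pw_len[simp]: "length (pw L k) = k * length L" by (simp add: pw_def length_concat sum_list_replicate)

abbreviation "QQ \<equiv> [Sig, Rho, Sig, Rho]"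

lemma pwP_red: "fvb_reduced (pw rs_sq k) \<and> (k > 0 \<longrightarrow> hd (pw rs_sq k) = Rho)"
  by (induction k) (auto simp: pw_Suc rs_sq_def fvb_reduced_Cons)

lemma pwQ_red: "fvb_reduced (pw QQ k) \<and> (k > 0 \<longrightarrow> hd (pw QQ k) = Sig)"
  by (induction k) (auto simp: pw_Suc fvb_reduced_Cons)

lemma rhoc_pw: "rhoc (pw rs_sq k) = 2 * k" "rhoc (pw QQ k) = 2 * k"
  by (induction k) (auto simp: pw_Suc rhoc_def rs_sq_def)

lemma rev_pwP: "rev (pw rs_sq k) = pw QQ k"
  by (simp add: pw_def rev_concat rs_sq_def)

lemma rev_pwQ: "rev (pw QQ k) = pw rs_sq k"
  using rev_pwP[of k] by (metis rev_rev_ident)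

lemma FVX2_char: "g \<in> FVX2 \<longleftrightarrow> (\<exists>k. g = pw rs_sq k) \<or> (\<exists>k. g = pw QQ k)"
proof
  assume "(\<exists>k. g = pw rs_sq k) \<or> (\<exists>k. g = pw QQ k)"
  then show "g \<in> FVX2"
    using pwP_red pwQ_red rhoc_pw
    by (auto simp: FVX2_def FVP2_def FVK2_def FVB2_def rhoc_def[symmetric] rs_sq_def)
next
  assume "g \<in> FVX2"
  then have "fvb_reduced g" "even (length g)" "even (rhoc g)"
    by (auto simp: FVX2_def FVP2_def FVK2_def FVB2_def rhoc_def)
  then show "(\<exists>k. g = pw rs_sq k) \<or> (\<exists>k. g = pw QQ k)"
  proof (induction "length g" arbitrary: g rule: less_induct)
    case less
    show ?case
    proof (cases g)
      case Nil then show ?thesis by (auto intro: exI[of _ 0])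
    next
      case (Cons a g1)
      then obtain b g2 where g1: "g1 = b # g2" using less.prems(2) by (cases g1) auto
      show ?thesis
      proof (cases g2)
        case Nil
        then show ?thesis using less.prems Cons g1 by (cases a; cases b) (auto simp: rhoc_def)
      next
        case (Cons c g3)
        then obtain d r where g3: "g3 = d # r" using less.prems(2) Cons g1 \<open>g = a # g1\<close>
          by (cases g3) auto
        have abcd: "b \<noteq> a" "c \<noteq> b" "d \<noteq> c" using less.prems(1) \<open>g = a # g1\<close> g1 Cons g3 by auto
        have rr: "fvb_reduced r" "r \<noteq> [] \<longrightarrow> hd r \<noteq> d"
          using less.prems(1) \<open>g = a # g1\<close> g1 Cons g3 by (auto simp: fvb_reduced_Cons)
        have "even (length r)" "even (rhoc r)"
          using less.prems(2,3) \<open>g = a # g1\<close> g1 Cons g3 abcd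
          by (auto simp: rhoc_def) (cases a; cases b; cases c; cases d; auto)+
        then have ih: "(\<exists>k. r = pw rs_sq k) \<or> (\<exists>k. r = pw QQ k)"
          using less.hyps[of r] rr \<open>g = a # g1\<close> g1 Cons g3 by auto
        show ?thesis
        proof (cases a)
          case Sig
          then have "d = Rho" "g = QQ @ r" using abcd \<open>g = a # g1\<close> g1 Cons g3
            by (cases b; cases c; cases d; auto)+
          moreover have "\<exists>k. r = pw QQ k"
            using ih rr pwP_red \<open>d = Rho\<close>
            by (metis hd_append2 less_numeral_extra(3) not_gr0 pw_0 sr.distinct(1) pwQ_red)
          ultimately show ?thesis by (auto intro!: exI[of _ "Suc _"] simp: pw_Suc)
        next
          case Rho
          then have "d = Sig" "g = rs_sq @ r" using abcd \<open>g = a # g1\<close> g1 Cons g3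
            by (cases b; cases c; cases d; auto simp: rs_sq_def)+
          moreover have "\<exists>k. r = pw rs_sq k"
            using ih rr pwQ_red \<open>d = Sig\<close>
            by (metis hd_append2 less_numeral_extra(3) not_gr0 pw_0 sr.distinct(1) pwP_red)
          ultimately show ?thesis by (auto intro!: exI[of _ "Suc _"] simp: pw_Suc)
        qed
      qed
    qed
  qed
qed

lemma fvb_pow_eq: "fvb_pow rs_sq n = (if 0 \<le> n then pw rs_sq (nat n) else pw QQ (nat (- n)))"
proof -
  have a: "(fvb_mult rs_sq ^^ k) [] = pw rs_sq k" for k
  proof (induction k)
    case (Suc k)
    have "fvb_reduced (pw rs_sq (Suc k))" using pwP_red by blast
    then show ?case using Suc by (simp add: fvb_mult_def pw_Suc fvb_red_reduced)
  qed simp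
  have b: "(fvb_mult QQ ^^ k) [] = pw QQ k" for k
  proof (induction k)
    case (Suc k)
    have "fvb_reduced (pw QQ (Suc k))" using pwQ_red by blast
    then show ?case using Suc by (simp add: fvb_mult_def pw_Suc fvb_red_reduced)
  qed simp
  show ?thesis using a b by (simp add: fvb_pow_def fvb_inv_def rs_sq_def)
qed

lemma FVX2_range: "FVX2 = range (fvb_pow rs_sq)"
proof
  show "FVX2 \<subseteq> range (fvb_pow rs_sq)"
  proof
    fix g assume "g \<in> FVX2"
    then consider k where "g = pw rs_sq k" | k where "g = pw QQ k" using FVX2_char by blast
    then show "g \<in> range (fvb_pow rs_sq)"
    proof cases
      case 1 then show ?thesis by (auto simp: fvb_pow_eq intro!: image_eqI[of _ _ "int k"])
    next
      case 2 then show ?thesis by (auto simp: fvb_pow_eq intro!: image_eqI[of _ _ "- int k"])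
    qed
  qed
next
  show "range (fvb_pow rs_sq) \<subseteq> FVX2"
    by (auto simp: fvb_pow_eq FVX2_char)
qed

lemma fvb_pow_inj: "inj (fvb_pow rs_sq)"
proof
  fix n m assume e: "fvb_pow rs_sq n = fvb_pow rs_sq m"
  have l: "length (fvb_pow rs_sq n) = 4 * nat \<bar>n\<bar>" for n
    by (simp add: fvb_pow_eq) (simp add: rs_sq_def)
  have h: "fvb_pow rs_sq n \<noteq> [] \<Longrightarrow> hd (fvb_pow rs_sq n) = (if 0 \<le> n then Rho else Sig)" for n
    using pwP_red[of "nat n"] pwQ_red[of "nat (-n)"]
    by (cases "nat n = 0"; cases "nat (-n) = 0") (auto simp: fvb_pow_eq)
  have "nat \<bar>n\<bar> = nat \<bar>m\<bar>" using l[of n] l[of m] e by simp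
  moreover have "n \<noteq> 0 \<Longrightarrow> (0 \<le> n \<longleftrightarrow> 0 \<le> m)"
  proof -
    assume "n \<noteq> 0"
    then have "fvb_pow rs_sq n \<noteq> []" using l[of n] by auto
    then show ?thesis using h[of n] h[of m] e by (auto split: if_splits)
  qed
  ultimately show "n = m" by (cases "n = 0") auto
qed


lemma cyc_decomp: "fg_reduced u \<Longrightarrow> u \<noteq> [] \<Longrightarrow>
  \<exists>c v. u = c @ v @ fg_inv c \<and> v \<noteq> [] \<and> hd v \<noteq> fg_invl (last v)"
proof (induction "length u" arbitrary: u rule: less_induct)
  case less
  show ?case
  proof (cases "hd u = fg_invl (last u)")
    case False
    then show ?thesis using less.prems by (intro exI[of _ "[]"] exI[of _ u]) simp
  next
    case True
    obtain x u1 where u: "u = x # u1" using less.prems by (cases u) auto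
    have "u1 \<noteq> []" using True u by auto
    then obtain mid y where u1: "u1 = mid @ [y]" by (metis rev_exhaust)
    have y: "y = fg_invl x" using True u u1 by (metis invl_invl last_snoc list.sel(1) last_ConsR \<open>u1 \<noteq> []\<close>)
    have "mid \<noteq> []" using less.prems(1) u u1 y by (auto simp: reduced_Cons)
    moreover have "fg_reduced mid" using less.prems(1) u u1 by (simp add: reduced_Cons reduced_append)
    ultimately obtain c v where cv: "mid = c @ v @ fg_inv c" "v \<noteq> []" "hd v \<noteq> fg_invl (last v)"
      using less.hyps[of mid] u u1 by auto
    show ?thesis
      by (rule exI[of _ "x # c"], rule exI[of _ v]) (simp add: cv u u1 y inv_Cons)
  qed
qed

lemma pw_hd_last: "k > 0 \<Longrightarrow> v \<noteq> [] \<Longrightarrow> pw v k \<noteq> [] \<and> hd (pw v k) = hd v \<and> last (pw v k) = last v"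
proof (induction k)
  case (Suc k) then show ?case by (cases "k = 0") (auto simp: pw_Suc)
qed simp

lemma pw_reduced: "fg_reduced v \<Longrightarrow> v \<noteq> [] \<Longrightarrow> hd v \<noteq> fg_invl (last v) \<Longrightarrow> fg_reduced (pw v k)"
proof (induction k)
  case (Suc k)
  then show ?case using pw_hd_last[of k v]
    by (cases "k = 0") (auto simp: pw_Suc reduced_append)
qed simp

lemma red_pw_cong: "fg_red (pw (fg_red u) k) = fg_red (pw u k)"
  unfolding pw_def by (induction k) (simp_all, metis red_append_red1 red_append_red2)

lemma torsion_free: "k > 0 \<Longrightarrow> fg_red (pw u k) = [] \<Longrightarrow> fg_red u = []"
proof (rule ccontr)
  assume k: "k > 0" and e: "fg_red (pw u k) = []" and ne: "fg_red u \<noteq> []"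
  obtain c v where cv: "fg_red u = c @ v @ fg_inv c" "v \<noteq> []" "hd v \<noteq> fg_invl (last v)"
    using cyc_decomp[OF reduced_red ne] by blast
  have ru: "fg_reduced (c @ v @ fg_inv c)" using cv(1) by (metis reduced_red)
  then have rv: "fg_reduced v" by (simp add: reduced_append)
  have eq: "fg_red (pw (c @ v @ fg_inv c) k) = fg_red (c @ pw v k @ fg_inv c)" if "k > 0" for k
    using that
  proof (induction k)
    case (Suc k)
    show ?case
    proof (cases "k = 0")
      case True then show ?thesis by (simp add: pw_Suc)
    next
      case False
      have "fg_red (pw (c @ v @ fg_inv c) (Suc k)) = fg_red ((c @ v @ fg_inv c) @ fg_red (pw (c @ v @ fg_inv c) k))"
        by (simp only: pw_Suc red_append_red2)
      also have "\<dots> = fg_red ((c @ v @ fg_inv c) @ c @ pw v k @ fg_inv c)" using Suc False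
        by (metis gr0I red_append_red2)
      also have "\<dots> = fg_red (c @ v @ pw v k @ fg_inv c)"
        using red_cancel_mid(2)[of "c @ v" c "pw v k @ fg_inv c"] by simp
      finally show ?thesis by (simp add: pw_Suc)
    qed
  qed simp
  have P: "pw v k \<noteq> []" "hd (pw v k) = hd v" "last (pw v k) = last v" using pw_hd_last[OF k cv(2)] by auto
  have rp: "fg_reduced (pw v k)" using pw_reduced[OF rv cv(2,3)] .
  have "fg_reduced (c @ pw v k @ fg_inv c)"
    using ru rp P cv(2) by (auto simp: reduced_append)
  then have "fg_red (c @ pw v k @ fg_inv c) \<noteq> []" using P by (simp add: red_reduced)
  moreover have "fg_red (pw u k) = fg_red (c @ pw v k @ fg_inv c)"
    using red_pw_cong[of u k] eq[OF k] cv(1) by simp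
  ultimately show False using e by simp
qed


definition Uw :: "ab fword \<Rightarrow> int \<Rightarrow> gen4 fword" where
  "Uw w m = fg_inv (w_at_y w) @ fg_genpow Y2 m @ fg_inv (wy2 w) @ fg_genpow Y1 m"

definition Vw :: "ab fword \<Rightarrow> int \<Rightarrow> gen4 fword" where
  "Vw w m = w_at_y w @ fg_inv (fg_genpow Y1 m) @ wy2 w @ fg_inv (fg_genpow Y2 m)"

lemma Theta_rs: "Theta w m rs_sq f = fg_subst (Theta_img w m Sig) (fg_subst (Theta_img w m Rho)
   (fg_subst (Theta_img w m Sig) (fg_subst (Theta_img w m Rho) f)))"
  by (simp add: Theta_def rs_sq_def)

lemma P_X1: "Theta w m rs_sq [(X1, True)] = fg_red ((X1, True) # Uw w m)"
  unfolding Theta_rs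
  by (simp only: calc1, simp add: calc2 fg_gen_def Uw_def)

lemma P_X2: "Theta w m rs_sq [(X2, True)] = fg_red ((X2, True) # Vw w m)"
  unfolding Theta_rs
  by (simp only: calc1, simp add: calc2 fg_gen_def Vw_def)

lemma rhoc_rs: "rhoc rs_sq = 2" by (simp add: rhoc_def rs_sq_def)

lemma P_Y: "Theta w m rs_sq [(Y1, True)] = [(Y1, True)]" "Theta w m rs_sq [(Y2, True)] = [(Y2, True)]"
  using Theta_Y[of w m rs_sq] by (simp_all add: rhoc_rs)

lemma U_V: "fg_red (Uw w m) = [] \<Longrightarrow> fg_red (Vw w m) = []"
proof -
  assume "fg_red (Uw w m) = []"
  then have "fg_red (fg_inv (Uw w m)) = []" by (simp add: red_nil_inv)
  then have "fg_red ((fg_inv (fg_genpow Y1 m) @ wy2 w @ fg_inv (fg_genpow Y2 m)) @ w_at_y w) = []"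
    by (simp add: Uw_def)
  from red_rotate[OF this] show ?thesis by (simp add: Vw_def)
qed

definition triv :: "ab fword \<Rightarrow> int \<Rightarrow> sr list \<Rightarrow> bool" where
  "triv w m g \<longleftrightarrow> (\<forall>f. fg_reduced f \<longrightarrow> Theta w m g f = f)"

lemma ker_triv: "Theta_ker w m = {g \<in> FVB2. triv w m g}"
  by (auto simp: Theta_ker_def triv_def)

lemma triv_iff: "triv w m g \<longleftrightarrow> (\<forall>a. Theta w m g [(a, True)] = [(a, True)])"
proof
  assume "triv w m g" then show "\<forall>a. Theta w m g [(a, True)] = [(a, True)]" by (simp add: triv_def)
next
  assume h: "\<forall>a. Theta w m g [(a, True)] = [(a, True)]"
  have "Theta w m g f = f" if "fg_reduced f" for f
    using that h by (simp add: Theta_subst[OF that] subst_id red_reduced)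
  then show "triv w m g" by (simp add: triv_def)
qed

lemma triv_append: "triv w m g \<Longrightarrow> triv w m h \<Longrightarrow> triv w m (g @ h)"
  by (simp add: triv_def Theta_append Theta_reduced)

lemma triv_rev: "triv w m g \<Longrightarrow> triv w m (rev g)"
proof -
  assume t: "triv w m g"
  have "Theta w m (rev g) f = f" if f: "fg_reduced f" for f
  proof -
    have "Theta w m (rev g) f = Theta w m (rev g) (Theta w m g f)" using t f by (simp add: triv_def)
    also have "\<dots> = Theta w m (g @ rev g) f" by (simp add: Theta_append)
    also have "\<dots> = Theta w m (fvb_red (g @ rev g)) f" by (rule Theta_red[OF f])
    finally show ?thesis by simp
  qed
  then show ?thesis by (simp add: triv_def)
qed

lemma triv_pw: "triv w m g \<Longrightarrow> triv w m (pw g k)"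
proof (induction k)
  case 0 then show ?case by (simp add: triv_def)
next
  case (Suc k) then show ?case by (simp add: pw_Suc triv_append)
qed

lemma cond_triv: "fg_red (Uw w m) = [] \<Longrightarrow> triv w m rs_sq"
proof -
  assume u: "fg_red (Uw w m) = []"
  have v: "fg_red (Vw w m) = []" using U_V[OF u] .
  have "Theta w m rs_sq [(a, True)] = [(a, True)]" for a
  proof (cases a)
    case X1
    have "fg_red ((X1, True) # Uw w m) = fg_red ([(X1, True)] @ fg_red (Uw w m))"
      by (metis append_Cons append_Nil red_append_red2)
    then show ?thesis using X1 u by (simp add: P_X1 red_Cons)
  next
    case X2
    have "fg_red ((X2, True) # Vw w m) = fg_red ([(X2, True)] @ fg_red (Vw w m))"
      by (metis append_Cons append_Nil red_append_red2)
    then show ?thesis using X2 v by (simp add: P_X2 red_Cons)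
  qed (simp_all add: P_Y)
  then show ?thesis by (simp add: triv_iff)
qed

lemma yonly_U: "yonly (Uw w m)" by (simp add: Uw_def yonly_genpow)

lemma yonly_pw: "yonly u \<Longrightarrow> yonly (pw u k)" by (induction k) (auto simp: pw_Suc)

lemma Theta_pw_X1: "Theta w m (pw rs_sq k) [(X1, True)] = fg_red ((X1, True) # pw (Uw w m) k)"
proof (induction k)
  case 0 then show ?case by (simp add: red_Cons)
next
  case (Suc k)
  let ?Phi = "\<lambda>a. Theta w m rs_sq [(a, True)]"
  have "Theta w m (pw rs_sq (Suc k)) [(X1, True)] = Theta w m rs_sq (fg_red ((X1, True) # pw (Uw w m) k))"
    using Suc by (simp add: pw_Suc2 Theta_append)
  also have "\<dots> = fg_subst ?Phi (fg_red ((X1, True) # pw (Uw w m) k))"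
    by (rule Theta_subst) simp
  also have "\<dots> = fg_subst ?Phi ([(X1, True)] @ pw (Uw w m) k)" by simp
  also have "\<dots> = fg_red (fg_red (?Phi X1) @ fg_subst ?Phi (pw (Uw w m) k))"
    by (simp only: subst_append subst_gen)
  also have "fg_subst ?Phi (pw (Uw w m) k) = fg_red (pw (Uw w m) k)"
  proof (rule subst_id)
    fix x assume "x \<in> set (pw (Uw w m) k)"
    then have "fst x = Y1 \<or> fst x = Y2" using yonly_pw[OF yonly_U] by (auto simp: yonly_def)
    then show "?Phi (fst x) = [(fst x, True)]" using P_Y by auto
  qed
  finally show ?case by (simp add: P_X1 pw_Suc)
qed

lemma red_X1_cancel: "fg_red ((X1, True) # Z) = [(X1, True)] \<Longrightarrow> fg_red Z = []"
proof -
  assume e: "fg_red ((X1, True) # Z) = [(X1, True)]"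
  have "fg_red Z = fg_red ([(X1, False)] @ [(X1, True)] @ Z)"
    using red_cancel_r[of "[(X1, True)]" Z] by (simp add: fg_invl_def)
  also have "\<dots> = fg_red ([(X1, False)] @ fg_red ((X1, True) # Z))"
    by (metis append_Cons append_Nil red_append_red2)
  finally show ?thesis using e by (simp add: red_Cons fg_invl_def)
qed

lemma main_ker:
  "(\<not> faithful w m \<longleftrightarrow> fg_red (Uw w m) = []) \<and>
   (fg_red (Uw w m) = [] \<longrightarrow> Theta_ker w m = FVX2)"
proof -
  have A: "fg_red (Uw w m) = [] \<Longrightarrow> Theta_ker w m = FVX2"
  proof
    assume u: "fg_red (Uw w m) = []"
    show "Theta_ker w m \<subseteq> FVX2" using ker_FVX2 by blast
    show "FVX2 \<subseteq> Theta_ker w m"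
    proof
      fix g assume g: "g \<in> FVX2"
      then have "g \<in> FVB2" by (simp add: FVX2_def FVP2_def)
      moreover have "triv w m g"
        using g FVX2_char triv_pw[OF cond_triv[OF u]] triv_rev[OF triv_pw[OF cond_triv[OF u]]]
        by (metis rev_pwP)
      ultimately show "g \<in> Theta_ker w m" by (simp add: ker_triv)
    qed
  qed
  have B: "\<not> faithful w m \<Longrightarrow> fg_red (Uw w m) = []"
  proof -
    assume "\<not> faithful w m"
    then obtain g where g: "g \<in> Theta_ker w m" "g \<noteq> []" using not_faithful_iff by blast
    have t: "triv w m g" using g by (simp add: ker_triv)
    from ker_FVX2[OF g(1)] obtain k where "g = pw rs_sq k \<or> g = pw QQ k" using FVX2_char by blast
    then have tk: "triv w m (pw rs_sq k)" and k: "k > 0"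
      using t g(2) triv_rev[OF t] rev_pwQ by (auto intro: gr0I)
    have "fg_red ((X1, True) # pw (Uw w m) k) = [(X1, True)]"
      using tk by (simp add: triv_def Theta_pw_X1[symmetric])
    then have "fg_red (pw (Uw w m) k) = []" by (rule red_X1_cancel)
    then show ?thesis using torsion_free k by blast
  qed
  have C: "fg_red (Uw w m) = [] \<Longrightarrow> \<not> faithful w m"
  proof -
    assume u: "fg_red (Uw w m) = []"
    have "rs_sq \<in> Theta_ker w m" using A[OF u] FVX2_char[of rs_sq]
      by (metis One_nat_def append.right_neutral pw_0 pw_Suc)
    then show ?thesis using not_faithful_iff by (auto simp: rs_sq_def)
  qed
  show ?thesis using A B C by blast
qed


definition swp :: "ab \<Rightarrow> ab" where "swp a = (case a of GA \<Rightarrow> GB | GB \<Rightarrow> GA)"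
definition renA :: "ab \<Rightarrow> gen4" where "renA a = (case a of GA \<Rightarrow> Y1 | GB \<Rightarrow> Y2)"

lemma swp_swp[simp]: "swp (swp a) = a" by (cases a) (simp_all add: swp_def)
lemma swp_simps[simp]: "swp GA = GB" "swp GB = GA" by (simp_all add: swp_def)
lemma inj_swp: "inj swp" by (metis injI swp_swp)
lemma inj_renA: "inj renA" by (auto simp: inj_def renA_def split: ab.splits)

abbreviation sw :: "ab fword \<Rightarrow> ab fword" where "sw \<equiv> ren swp"

lemma ren_ren: "ren r (ren s u) = ren (r \<circ> s) u" by (simp add: ren_def split_def)
lemma sw_sw[simp]: "sw (sw u) = u" by (induction u) (auto simp: ren_def)

lemma W_ren: "w_at_y w = ren renA (fg_red w)"
  unfolding w_at_y_def
  by (subst subst_ren[where r = renA]) (auto simp: fg_gen_def renA_def red_ren[OF inj_renA] split: ab.splits)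

lemma W2_ren: "wy2 w = ren renA (sw (fg_red w))"
proof -
  have "wy2 w = fg_red (ren (renA \<circ> swp) w)"
    unfolding wy2_def
    by (subst subst_ren[where r = "renA \<circ> swp"]) (auto simp: fg_gen_def renA_def swp_def split: ab.splits)
  also have "\<dots> = ren renA (fg_red (sw w))" by (simp add: ren_ren[symmetric] red_ren[OF inj_renA])
  finally show ?thesis by (simp add: red_ren[OF inj_swp])
qed

definition E2 :: "ab fword \<Rightarrow> int \<Rightarrow> ab fword" where
  "E2 w m = fg_inv (fg_red w) @ fg_genpow GB m @ fg_inv (sw (fg_red w)) @ fg_genpow GA m"

lemma U_E2: "Uw w m = ren renA (E2 w m)"
  by (simp add: Uw_def E2_def W_ren W2_ren ren_inv ren_genpow renA_def)

lemma U_iff_E2: "fg_red (Uw w m) = [] \<longleftrightarrow> fg_red (E2 w m) = []"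
  by (simp only: U_E2 red_ren[OF inj_renA]) (simp add: ren_def)

lemma rotate_iff: "fg_red (a @ b) = [] \<longleftrightarrow> fg_red (b @ a) = []"
  using red_rotate by blast

lemma genpow_neg: "fg_genpow a (- k) = fg_inv (fg_genpow a k)" by (simp add: genpow_inv)

lemma E2_iff: "fg_red (E2 w m) = [] \<longleftrightarrow>
   fg_red ((fg_red w @ fg_genpow GA (- m)) @ sw (fg_red w @ fg_genpow GA (- m))) = []"
proof -
  have "fg_red (E2 w m) = [] \<longleftrightarrow> fg_red (fg_inv (E2 w m)) = []" by (simp add: red_nil_inv)
  also have "fg_inv (E2 w m) = fg_genpow GA (- m) @ (sw (fg_red w) @ fg_genpow GB (- m)) @ fg_red w"
    by (simp add: E2_def genpow_inv ren_inv)
  also have "fg_red \<dots> = [] \<longleftrightarrow> fg_red (fg_red w @ fg_genpow GA (- m) @ sw (fg_red w) @ fg_genpow GB (- m)) = []"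
    using rotate_iff[of "fg_genpow GA (- m) @ (sw (fg_red w) @ fg_genpow GB (- m))" "fg_red w"] by simp
  finally show ?thesis by (simp add: ren_genpow)
qed

lemma red_sw: "fg_red (sw u) = sw (fg_red u)" by (rule red_ren[OF inj_swp])

lemma sw_inv: "sw (fg_inv u) = fg_inv (sw u)" by (rule ren_inv)

lemma zsw_red: "fg_red (z @ sw z) = fg_red (fg_red z @ sw (fg_red z))"
  by (metis red_append_red1 red_append_red2 red_sw)

definition swl :: "ab \<times> bool \<Rightarrow> ab \<times> bool" where "swl x = (swp (fst x), snd x)"

lemma swl_swl: "swl (swl z) = z" by (simp add: swl_def)
lemma swl_invl: "swl (fg_invl z) = fg_invl (swl z)" by (simp add: swl_def fg_invl_def)

lemma sw_Cons: "sw (x # u) = swl x # sw u" by (simp add: ren_def swl_def split_def)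
lemma sw_snoc: "sw (u @ [x]) = sw u @ [swl x]" by (simp add: ren_def swl_def split_def)

lemma split_sw: "sw u = fg_inv u \<Longrightarrow> \<exists>v. u = v @ fg_inv (sw v)"
proof (induction "length u" arbitrary: u rule: less_induct)
  case less
  show ?case
  proof (cases u)
    case Nil then show ?thesis by (intro exI[of _ "[]"]) simp
  next
    case (Cons x u1)
    show ?thesis
    proof (cases u1 rule: rev_cases)
      case Nil
      then show ?thesis using less.prems Cons
        by (cases x; cases "fst x") (auto simp: ren_def fg_invl_def swp_def)
    next
      case (snoc mid y)
      have e: "swl x # sw mid @ [swl y] = fg_invl y # fg_inv mid @ [fg_invl x]"
        using less.prems Cons snoc by (simp add: sw_Cons sw_snoc inv_Cons fg_inv_def)
      then have m: "sw mid = fg_inv mid" and y: "swl y = fg_invl x" by auto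
      obtain v' where v': "mid = v' @ fg_inv (sw v')" using less.hyps[OF _ m] Cons snoc by auto
      have "y = fg_invl (swl x)" using y by (metis swl_swl swl_invl)
      then have "u = (x # v') @ fg_inv (sw (x # v'))"
        using Cons snoc v' by (simp add: sw_Cons inv_Cons)
      then show ?thesis by blast
    qed
  qed
qed

fun altl :: "ab \<Rightarrow> ab \<Rightarrow> int list \<Rightarrow> ab fword" where
  "altl a b [] = []"
| "altl a b (k # ks) = fg_genpow a k @ altl b a ks"

lemma alt_word_altl: "alt_word a b ks = fg_red (altl a b ks)"
proof -
  have "concat (map (\<lambda>i. fg_genpow (if even i then a else b) (ks ! i)) [0..<length ks]) = altl a b ks"
  proof (induction ks arbitrary: a b)
    case (Cons k ks)
    have "[0..<length (k # ks)] = 0 # map Suc [0..<length ks]"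
      by (simp add: upt_conv_Cons map_Suc_upt del: upt_Suc)
    moreover have "(\<lambda>x. fg_genpow (if odd x then a else b) (ks ! x)) = (\<lambda>i. fg_genpow (if even i then b else a) (ks ! i))"
      by auto
    ultimately show ?case using Cons[of b a] by (simp add: comp_def del: upt_Suc)
  qed simp
  then show ?thesis by (simp add: alt_word_def)
qed

lemma altl_sw: "altl (swp a) (swp b) ks = sw (altl a b ks)"
  by (induction ks arbitrary: a b) (simp_all add: ren_genpow)

definition interior :: "int list \<Rightarrow> bool" where
  "interior ks \<longleftrightarrow> (\<forall>i. 0 < i \<and> i + 1 < length ks \<longrightarrow> ks ! i \<noteq> 0)"

lemma genpow_succ: "0 \<le> k \<Longrightarrow> fg_genpow c (k + 1) = (c, True) # fg_genpow c k"
  by (simp add: fg_genpow_def nat_add_distrib)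
lemma genpow_pred: "k \<le> 0 \<Longrightarrow> fg_genpow c (k - 1) = (c, False) # fg_genpow c k"
proof -
  assume "k \<le> 0"
  then have "nat (- (k - 1)) = Suc (nat (- k))" by simp
  then show ?thesis using \<open>k \<le> 0\<close> by (simp add: fg_genpow_def)
qed

lemma hd_genpow: "k \<noteq> 0 \<Longrightarrow> fg_genpow c k \<noteq> [] \<and> hd (fg_genpow c k) = (c, 0 < k)"
  by (auto simp: fg_genpow_def)

lemma altl_repr: "fg_reduced v \<Longrightarrow> \<exists>ks. ks \<noteq> [] \<and> interior ks \<and> altl a (swp a) ks = v"
proof (induction v arbitrary: a)
  case Nil
  then show ?case by (intro exI[of _ "[0]"]) (simp add: interior_def fg_genpow_def)
next
  case (Cons x v)
  obtain c e where x: "x = (c, e)" by (cases x)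
  have rv: "fg_reduced v" using Cons.prems by (simp add: reduced_Cons)
  obtain ks' where ks': "ks' \<noteq> []" "interior ks'" "altl c (swp c) ks' = v" using Cons.IH[OF rv] by blast
  obtain k0 rest where kr: "ks' = k0 # rest" using ks'(1) by (cases ks') auto
  have vv: "v = fg_genpow c k0 @ altl (swp c) c rest" using ks'(3) kr by simp
  define k1 where "k1 = (if e then k0 + 1 else k0 - 1)"
  have hdv: "v \<noteq> [] \<Longrightarrow> hd v \<noteq> (c, \<not> e)" using Cons.prems x by (simp add: reduced_Cons fg_invl_def)
  have g1: "fg_genpow c k1 = (c, e) # fg_genpow c k0"
  proof (cases e)
    case True
    have "0 \<le> k0"
    proof (rule ccontr)
      assume "\<not> 0 \<le> k0"
      then have "v \<noteq> [] \<and> hd v = (c, False)" using hd_genpow[of k0 c] vv by auto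
      then show False using hdv True by simp
    qed
    then show ?thesis using True by (simp add: k1_def genpow_succ)
  next
    case False
    have "k0 \<le> 0"
    proof (rule ccontr)
      assume "\<not> k0 \<le> 0"
      then have "v \<noteq> [] \<and> hd v = (c, True)" using hd_genpow[of k0 c] vv by auto
      then show False using hdv False by simp
    qed
    then show ?thesis using False by (simp add: k1_def genpow_pred)
  qed
  have k1nz: "k1 \<noteq> 0" using g1 by (auto simp: fg_genpow_def split: if_splits)
  let ?ks1 = "k1 # rest"
  have A: "altl c (swp c) ?ks1 = x # v" using g1 vv x by simp
  have I: "interior ?ks1" using ks'(2) kr by (auto simp: interior_def)
  show ?case
  proof (cases "c = a")
    case True then show ?thesis using A I by blast
  next
    case False
    then have c: "c = swp a" by (cases a; cases c) auto
    have "altl a (swp a) (0 # ?ks1) = x # v" using A c by (simp add: fg_genpow_def)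
    moreover have "interior (0 # ?ks1)"
      using I k1nz unfolding interior_def
      by (auto simp: nth_Cons split: nat.splits)
    ultimately show ?thesis by blast
  qed
qed

lemma special_iff: "fg_reduced w \<Longrightarrow>
  fg_red (Uw w m) = [] \<longleftrightarrow> (\<exists>ks. ks \<noteq> [] \<and> interior ks \<and> w = special_word ks m)"
proof -
  assume rw: "fg_reduced w"
  let ?z = "w @ fg_genpow GA (- m)"
  have c0: "fg_red (Uw w m) = [] \<longleftrightarrow> fg_red (fg_red ?z @ sw (fg_red ?z)) = []"
  proof -
    have e1: "fg_red (Uw w m) = [] \<longleftrightarrow> fg_red (?z @ sw ?z) = []"
      using U_iff_E2[of w m] E2_iff[of w m] red_reduced[OF rw] by simp
    show ?thesis using e1 zsw_red[of ?z] by metis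
  qed
  have bk: "fg_red (fg_red ?z @ fg_genpow GA m) = w"
    by (simp add: genpow_neg red_reduced[OF rw])
  show ?thesis
  proof
    assume "fg_red (Uw w m) = []"
    then have e: "fg_red (fg_red ?z @ sw (fg_red ?z)) = []" using c0 by simp
    let ?u = "fg_red ?z"
    have "fg_red (sw ?u) = fg_red (fg_inv ?u)" using uniq_inv[OF e] .
    then have "sw ?u = fg_inv ?u"
      using red_reduced[OF ren_reduced[OF inj_swp reduced_red]] red_reduced[OF reduced_inv[OF reduced_red]]
      by simp
    then obtain v where v: "?u = v @ fg_inv (sw v)" using split_sw by blast
    have rv: "fg_reduced v" using reduced_red[of ?z] v by (simp add: reduced_append)
    obtain ks where ks: "ks \<noteq> []" "interior ks" "altl GA GB ks = v"
      using altl_repr[OF rv, of GA] by auto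
    have a1: "alt_word GA GB ks = v" using ks(3) rv by (simp add: alt_word_altl red_reduced)
    have a2: "alt_word GB GA ks = sw v"
      using altl_sw[of GA GB ks] ks(3) ren_reduced[OF inj_swp rv]
      by (simp add: alt_word_altl red_reduced)
    have "special_word ks m = fg_red (fg_red (v @ fg_inv (sw v)) @ fg_genpow GA m)"
      by (simp add: special_word_def fg_mult_def a1 a2)
    also have "\<dots> = w" using bk v by (metis red_red)
    finally show "\<exists>ks. ks \<noteq> [] \<and> interior ks \<and> w = special_word ks m" using ks by metis
  next
    assume "\<exists>ks. ks \<noteq> [] \<and> interior ks \<and> w = special_word ks m"
    then obtain ks where w: "w = special_word ks m" by blast
    define v0 where "v0 = fg_red (altl GA GB ks)"
    have a1: "alt_word GA GB ks = v0" by (simp add: alt_word_altl v0_def)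
    have a2: "alt_word GB GA ks = sw v0"
      using altl_sw[of GA GB ks] by (simp add: alt_word_altl v0_def red_sw)
    have wv: "w = fg_red (v0 @ fg_inv (sw v0) @ fg_genpow GA m)"
      using w by (simp add: special_word_def fg_mult_def a1 a2)
    have rz: "fg_red ?z = fg_red (v0 @ fg_inv (sw v0))"
      using red_cancel_mid(3)[of "v0 @ fg_inv (sw v0)" "fg_genpow GA m"] by (simp add: wv genpow_neg)
    have "fg_red (fg_red ?z @ sw (fg_red ?z)) = fg_red ((v0 @ fg_inv (sw v0)) @ sw (v0 @ fg_inv (sw v0)))"
      by (metis rz zsw_red)
    also have "\<dots> = []" by (simp add: sw_inv)
    finally show "fg_red (Uw w m) = []" using c0 by simp
  qed
qed


theorem theorem2p5:
  fixes w :: "ab fword" and m1 :: int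
  assumes "fg_reduced w"
  shows "(\<not> faithful w m1 \<longleftrightarrow>
            (\<exists>ks. ks \<noteq> [] \<and> (\<forall>i. 0 < i \<and> i + 1 < length ks \<longrightarrow> ks ! i \<noteq> 0)
                  \<and> w = special_word ks m1))
       \<and> (\<not> faithful w m1 \<longrightarrow>
            Theta_ker w m1 = FVX2
          \<and> FVX2 = range (fvb_pow rs_sq)
          \<and> inj (fvb_pow rs_sq))"
  using main_ker[of w m1] special_iff[OF assms, of m1] FVX2_range fvb_pow_inj
  unfolding interior_def by blast

end
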